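(* Let $k\ge 0$ and let $V$ be a simple graded module over the graded tensor product $\mathcal C_k\otimes\mathfrak A_n$. For $(a_1,\dots,a_n)\in\mathbb C^n$ let $V(a_1,\dots,a_n)$ be the space of common eigenvectors of $\pi_1^2,\dots,\pi_n^2$ with eigenvalues $a_1,\dots,a_n$, and suppose $V(a_1,\dots,a_n)\neq 0$. Then for each $i=1,\dots,n-1$: (1) $a_i\ne a_{i+1}$; (2) if $a_i+a_{i+1}=(a_i-a_{i+1})^2$, then $\tau_i$ acts on $V(a_1,\dots,a_n)$ as the operator $\frac{\pi_i-\pi_{i+1}}{a_i-a_{i+1}}$; (3) if $a_i+a_{i+1}\ne(a_i-a_{i+1})^2$, then $V(a_1,\dots,a_{i-1},a_{i+1},a_i,a_{i+2},\dots,a_n)\ne 0$.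
   Context: $\mathfrak A_n$ is the $\mathbb Z_2$-graded $\mathbb C$-algebra generated by odd elements $\tau_1,\dots,\tau_{n-1}$ with relations $\tau_k^2=1$, $(\tau_k\tau_{k+1})^3=1$, $(\tau_k\tau_l)^2=-1$ for $|k-l|>1$. Set $\tau_{i,i+1}=\tau_i$, $\tau_{ij}=-\tau_{i,j-1}\tau_{j-1}\tau_{i,j-1}$ for $i<j-1$, $\tau_{ji}=-\tau_{ij}$, and $\pi_m=\sum_{j<m}\tau_{jm}$ ($\pi_1=0$). $\mathcal C_k$ is the Clifford algebra with odd generators $p_1,\dots,p_k$, $p_j^2=1$, $p_jp_l=-p_lp_j$ ($j\ne l$). The graded tensor product has multiplication $(a\otimes b)(a'\otimes b')=(-1)^{p(b)p(a')}aa'\otimes bb'$; $\mathfrak A_n$ is identified with $1\otimes\mathfrak A_n$. A simple graded module has no graded submodules other than $0$ and itself. *)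

theory Defs
  imports Complex_Main
begin

text \<open>A module V over the graded tensor product C_k (x) A_n is modelled as a complex
vector space (carrier = the type 'v, scalar multiplication smul) with a Z2-grading
V = V0 (+) V1, together with the odd linear operators P j (action of p_j (x) 1, j = 1..k)
and T i (action of 1 (x) tau_i, i = 1..n-1) satisfying the defining relations of
C_k, of A_n, and the sign rule of the graded tensor product
(p_j (x) 1)(1 (x) tau_i) = - (1 (x) tau_i)(p_j (x) 1).\<close>

text \<open>tauD T i d is the operator tau_{i,i+d} (d >= 1):
tau_{i,i+1} = tau_i, tau_{ij} = - tau_{i,j-1} tau_{j-1} tau_{i,j-1}.\<close>
fun tauD :: "(nat \<Rightarrow> 'v \<Rightarrow> 'v::ab_group_add) \<Rightarrow> nat \<Rightarrow> nat \<Rightarrow> 'v \<Rightarrow> 'v" where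
  "tauD T i 0 = (\<lambda>v. 0)"
| "tauD T i (Suc 0) = T i"
| "tauD T i (Suc (Suc d)) =
     (\<lambda>v. - tauD T i (Suc d) (T (i + Suc d) (tauD T i (Suc d) v)))"

definition tau_op :: "(nat \<Rightarrow> 'v \<Rightarrow> 'v::ab_group_add) \<Rightarrow> nat \<Rightarrow> nat \<Rightarrow> 'v \<Rightarrow> 'v" where
  "tau_op T i j = tauD T i (j - i)"

definition pi_op :: "(nat \<Rightarrow> 'v \<Rightarrow> 'v::ab_group_add) \<Rightarrow> nat \<Rightarrow> 'v \<Rightarrow> 'v" where
  "pi_op T m = (\<lambda>v. \<Sum>j\<in>{1..<m}. tau_op T j m v)"

definition graded_module ::
  "(complex \<Rightarrow> 'v \<Rightarrow> 'v::ab_group_add) \<Rightarrow> 'v set \<Rightarrow> 'v set \<Rightarrow> nat \<Rightarrow> nat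
    \<Rightarrow> (nat \<Rightarrow> 'v \<Rightarrow> 'v) \<Rightarrow> (nat \<Rightarrow> 'v \<Rightarrow> 'v) \<Rightarrow> bool" where
  "graded_module smul V0 V1 k n P T \<longleftrightarrow>
     vector_space smul \<and>
     module.subspace smul V0 \<and> module.subspace smul V1 \<and> V0 \<inter> V1 = {0} \<and>
     (\<forall>v. \<exists>v0\<in>V0. \<exists>v1\<in>V1. v = v0 + v1) \<and>
     (\<forall>j\<in>{1..k}. Vector_Spaces.linear smul smul (P j) \<and> P j ` V0 \<subseteq> V1 \<and> P j ` V1 \<subseteq> V0) \<and>
     (\<forall>i\<in>{1..<n}. Vector_Spaces.linear smul smul (T i) \<and> T i ` V0 \<subseteq> V1 \<and> T i ` V1 \<subseteq> V0) \<and>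
     (\<forall>j\<in>{1..k}. \<forall>v. P j (P j v) = v) \<and>
     (\<forall>j\<in>{1..k}. \<forall>l\<in>{1..k}. j \<noteq> l \<longrightarrow> (\<forall>v. P j (P l v) = - P l (P j v))) \<and>
     (\<forall>i\<in>{1..<n}. \<forall>v. T i (T i v) = v) \<and>
     (\<forall>i. 1 \<le> i \<and> i + 1 < n \<longrightarrow> (\<forall>v. ((T i \<circ> T (i+1)) ^^ 3) v = v)) \<and>
     (\<forall>i\<in>{1..<n}. \<forall>l\<in>{1..<n}. (i + 1 < l \<or> l + 1 < i) \<longrightarrow>
         (\<forall>v. T i (T l (T i (T l v))) = - v)) \<and>
     (\<forall>j\<in>{1..k}. \<forall>i\<in>{1..<n}. \<forall>v. P j (T i v) = - T i (P j v))"

definition graded_submodule ::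
  "(complex \<Rightarrow> 'v \<Rightarrow> 'v::ab_group_add) \<Rightarrow> 'v set \<Rightarrow> 'v set \<Rightarrow> nat \<Rightarrow> nat
    \<Rightarrow> (nat \<Rightarrow> 'v \<Rightarrow> 'v) \<Rightarrow> (nat \<Rightarrow> 'v \<Rightarrow> 'v) \<Rightarrow> 'v set \<Rightarrow> bool" where
  "graded_submodule smul V0 V1 k n P T W \<longleftrightarrow>
     module.subspace smul W \<and>
     (\<forall>j\<in>{1..k}. P j ` W \<subseteq> W) \<and> (\<forall>i\<in>{1..<n}. T i ` W \<subseteq> W) \<and>
     (\<forall>w\<in>W. \<exists>w0\<in>W \<inter> V0. \<exists>w1\<in>W \<inter> V1. w = w0 + w1)"

definition simple_graded_module ::
  "(complex \<Rightarrow> 'v \<Rightarrow> 'v::ab_group_add) \<Rightarrow> 'v set \<Rightarrow> 'v set \<Rightarrow> nat \<Rightarrow> nat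
    \<Rightarrow> (nat \<Rightarrow> 'v \<Rightarrow> 'v) \<Rightarrow> (nat \<Rightarrow> 'v \<Rightarrow> 'v) \<Rightarrow> bool" where
  "simple_graded_module smul V0 V1 k n P T \<longleftrightarrow>
     graded_module smul V0 V1 k n P T \<and> (UNIV :: 'v set) \<noteq> {0} \<and>
     (\<forall>W. graded_submodule smul V0 V1 k n P T W \<longrightarrow> W = {0} \<or> W = UNIV)"

definition pi_eigenspace ::
  "(complex \<Rightarrow> 'v \<Rightarrow> 'v::ab_group_add) \<Rightarrow> nat \<Rightarrow> (nat \<Rightarrow> 'v \<Rightarrow> 'v) \<Rightarrow> (nat \<Rightarrow> complex) \<Rightarrow> 'v set" where
  "pi_eigenspace smul n T a = {v. \<forall>m\<in>{1..n}. pi_op T m (pi_op T m v) = smul (a m) v}"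

end

theory Submission imports Defs begin

locale spinops =
  fixes smul :: "complex \<Rightarrow> 'v::ab_group_add \<Rightarrow> 'v" and n :: nat and T :: "nat \<Rightarrow> 'v \<Rightarrow> 'v"
  assumes vs: "vector_space smul"
  and Tlin: "\<And>i. i\<in>{1..<n} \<Longrightarrow> Vector_Spaces.linear smul smul (T i)"
  and Tsq: "\<And>i v. i\<in>{1..<n} \<Longrightarrow> T i (T i v) = v"
  and Tbraid: "\<And>i v. 1 \<le> i \<Longrightarrow> i+1 < n \<Longrightarrow> T i (T (i+1) (T i v)) = T (i+1) (T i (T (i+1) v))"
  and Tanti: "\<And>i l v. i\<in>{1..<n} \<Longrightarrow> l\<in>{1..<n} \<Longrightarrow> i+1<l \<or> l+1<i \<Longrightarrow> T i (T l v) = - T l (T i v)"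
begin

sublocale vs: vector_space smul by (rule vs)

definition lin :: "('v \<Rightarrow> 'v) \<Rightarrow> bool" where
  "lin f \<longleftrightarrow> (\<forall>u w. f (u+w) = f u + f w) \<and> (\<forall>c u. f (smul c u) = smul c (f u))"

lemma lin_add: "lin f \<Longrightarrow> f (u+w) = f u + f w" by (simp add: lin_def)
lemma lin_scale: "lin f \<Longrightarrow> f (smul c u) = smul c (f u)" by (simp add: lin_def)
lemma lin_zero: "lin f \<Longrightarrow> f 0 = 0"
  using lin_add[of f 0 0] by simp
lemma lin_neg: "lin f \<Longrightarrow> f (- u) = - f u"
  using lin_add[of f u "-u"] lin_zero[of f] by (metis add.commute add_eq_0_iff2)
lemma lin_diff: "lin f \<Longrightarrow> f (u - w) = f u - f w"
  using lin_add[of f u "-w"] lin_neg[of f w] by simp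
lemma lin_sum: "lin f \<Longrightarrow> f (\<Sum>j\<in>S. g j) = (\<Sum>j\<in>S. f (g j))"
  by (induction S rule: infinite_finite_induct) (auto simp: lin_zero lin_add)
lemma lin_comp: "lin f \<Longrightarrow> lin g \<Longrightarrow> lin (\<lambda>v. f (g v))"
  by (simp add: lin_def)
lemma lin_comp': "lin f \<Longrightarrow> lin g \<Longrightarrow> lin (f \<circ> g)"
  by (simp add: lin_def)
lemma lin_uminus: "lin f \<Longrightarrow> lin (\<lambda>v. - f v)"
  by (simp add: lin_def vs.scale_minus_right)
lemma lin_id: "lin (\<lambda>v. v)" "lin id" by (simp_all add: lin_def)
lemma lin_zerof: "lin (\<lambda>v. 0)"
  by (simp add: lin_def)
lemma lin_plus: "lin f \<Longrightarrow> lin g \<Longrightarrow> lin (\<lambda>v. f v + g v)"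
  using vs by (simp add: lin_def vector_space_def algebra_simps)
lemma lin_sumf: "(\<And>j. j \<in> S \<Longrightarrow> lin (f j)) \<Longrightarrow> lin (\<lambda>v. \<Sum>j\<in>S. f j v)"
  by (induction S rule: infinite_finite_induct) (auto intro: lin_plus lin_zerof)

lemma lin_T: "i\<in>{1..<n} \<Longrightarrow> lin (T i)"
  using Tlin[of i] unfolding lin_def Vector_Spaces.linear_iff by blast

lemma T_anti: "i\<in>{1..<n} \<Longrightarrow> l\<in>{1..<n} \<Longrightarrow> i+1<l \<or> l+1<i \<Longrightarrow> T i (T l v) = - T l (T i v)"
  by (rule Tanti)

abbreviation X where "X a d \<equiv> tauD T a d"

lemma tau_ind: "P 0 \<Longrightarrow> P (Suc 0) \<Longrightarrow> (\<And>d. P (Suc d) \<Longrightarrow> P (Suc (Suc d))) \<Longrightarrow> P d"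
  by (rule induct_nat_012) auto

lemma X_Suc_Suc: "X a (Suc (Suc d)) v = - X a (Suc d) (T (a + Suc d) (X a (Suc d) v))"
  by simp

lemma lin_X: "1 \<le> a \<Longrightarrow> a + d \<le> n \<Longrightarrow> lin (X a d)"
proof (induction d rule: tau_ind)
  case 1 then show ?case by (simp add: lin_zerof)
next
  case 2 then show ?case by (simp add: lin_T)
next
  case (3 d)
  have l1: "lin (X a (Suc d))" using 3 by auto
  have l2: "lin (T (a + Suc d))" using 3 by (intro lin_T) auto
  have "lin (\<lambda>v. - X a (Suc d) (T (a + Suc d) (X a (Suc d) v)))"
    by (rule lin_uminus, rule lin_comp[OF l1 lin_comp[OF l2 l1]])
  then show ?case by simp
qed

lemma X_neg: "1 \<le> a \<Longrightarrow> a + d \<le> n \<Longrightarrow> X a d (- u) = - X a d u"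
  using lin_neg[OF lin_X] .
lemma T_neg: "i\<in>{1..<n} \<Longrightarrow> T i (- u) = - T i u"
  using lin_neg[OF lin_T] .

lemma X_sq: "1 \<le> a \<Longrightarrow> 1 \<le> d \<Longrightarrow> a + d \<le> n \<Longrightarrow> X a d (X a d u) = u"
proof (induction d arbitrary: u rule: tau_ind)
  case 1 then show ?case by simp
next
  case 2 then show ?case by (simp add: Tsq)
next
  case (3 d)
  have n1: "X a (Suc d) (- w) = - X a (Suc d) w" for w using 3 by (intro X_neg) auto
  have n2: "T (Suc (a + d)) (- w) = - T (Suc (a + d)) w" for w using 3 by (intro T_neg) auto
  have s2: "T (Suc (a + d)) (T (Suc (a + d)) w) = w" for w using 3 by (intro Tsq) auto
  show ?case using 3 by (simp add: n1 n2 s2)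
qed

lemma X_anti:
  assumes "lin Y" "\<And>k u. k\<in>{a..<a+d} \<Longrightarrow> T k (Y u) = - Y (T k u)" "1 \<le> a" "a + d \<le> n"
  shows "X a d (Y u) = - Y (X a d u)"
  using assms(2-4)
proof (induction d arbitrary: u rule: tau_ind)
  case 1 then show ?case by (simp add: lin_zero[OF assms(1)])
next
  case 2 then show ?case by simp
next
  case (3 d)
  have n1: "X a (Suc d) (- w) = - X a (Suc d) w" for w using 3 by (intro X_neg) auto
  have n2: "T (Suc (a + d)) (- w) = - T (Suc (a + d)) w" for w using 3 by (intro T_neg) auto
  have ny: "Y (- w) = - Y w" for w using lin_neg[OF assms(1)] .
  have ih: "X a (Suc d) (Y w) = - Y (X a (Suc d) w)" for w using 3 by auto
  have t: "T (Suc (a + d)) (Y w) = - Y (T (Suc (a + d)) w)" for w using 3 by auto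
  show ?case by (simp add: n1 n2 ny ih t)
qed

lemma T_far_anti: "i\<in>{1..<n} \<Longrightarrow> 1 \<le> a \<Longrightarrow> a + d \<le> n \<Longrightarrow> (i + 1 < a \<or> a + d < i) \<Longrightarrow> X a d (T i u) = - T i (X a d u)"
  by (rule X_anti[OF lin_T]) (auto intro!: Tanti)

declare tauD.simps(3)[simp del]

lemma braid: "1 \<le> j \<Longrightarrow> 1 \<le> d \<Longrightarrow> j + d < n \<Longrightarrow>
   X j d (T (j+d) (X j d u)) = T (j+d) (X j d (T (j+d) u))"
proof (induction d arbitrary: u rule: tau_ind)
  case 1 then show ?case by simp
next
  case 2 then show ?case using Tbraid[of j u] by simp
next
  case (3 d)
  define i where "i = j + Suc d"
  define A where "A = X j (Suc d)"
  define a where "a = T i"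
  define b where "b = T (i+1)"
  have iA: "i \<in> {1..<n}" "i+1 \<in> {1..<n}" using 3 by (auto simp: i_def)
  have nA: "A (- w) = - A w" for w unfolding A_def using 3 by (intro X_neg) auto
  have na: "a (- w) = - a w" for w unfolding a_def using iA by (intro T_neg) auto
  have nb: "b (- w) = - b w" for w unfolding b_def using iA by (intro T_neg) auto
  have Ab: "A (b w) = - b (A w)" for w unfolding A_def b_def using 3 iA
    by (intro T_far_anti) (auto simp: i_def)
  have brd: "a (b (a w)) = b (a (b w))" for w unfolding a_def b_def using Tbraid[of i w] iA by auto
  have ih: "A (a (A w)) = a (A (a w))" for w unfolding A_def a_def i_def using 3 by auto
  have sa: "a (a w) = w" for w unfolding a_def using iA Tsq by auto
  have sb: "b (b w) = w" for w unfolding b_def using iA Tsq by auto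
  have X0: "X j (Suc (Suc d)) w = - A (a (A w))" for w by (simp add: A_def a_def i_def X_Suc_Suc)
  have X': "X j (Suc (Suc d)) w = - a (A (a w))" for w by (simp only: X0 ih)
  have "X j (Suc (Suc d)) (b (X j (Suc (Suc d)) u)) = a (A (a (b (a (A (a u))))))"
    by (simp add: X' nA na nb)
  also have "\<dots> = a (A (b (a (b (A (a u))))))" by (simp add: brd)
  also have "\<dots> = a (b (A (a (A (b (a u))))))" by (simp add: Ab nA na nb)
  also have "\<dots> = a (b (a (A (a (b (a u))))))" by (simp add: ih)
  also have "\<dots> = b (a (b (A (b (a (b u))))))" by (simp add: brd)
  also have "\<dots> = - b (a (A (a (b u))))" by (simp add: Ab nA na nb sb)
  also have "\<dots> = b (X j (Suc (Suc d)) (b u))" by (simp add: X' nb)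
  finally show ?case by (simp add: b_def i_def)
qed

lemma conj_first: "1 \<le> k \<Longrightarrow> k + e + 2 \<le> n \<Longrightarrow>
   T k (X k (Suc (Suc e)) (T k u)) = - X (Suc k) (Suc e) u"
proof (induction e arbitrary: u)
  case 0
  have k: "k \<in> {1..<n}" "Suc k \<in> {1..<n}" using 0 by auto
  show ?case using k by (simp add: X_Suc_Suc T_neg Tsq)
next
  case (Suc e)
  define Z where "Z = X k (Suc (Suc e))"
  define Y where "Y = X (Suc k) (Suc e)"
  define t where "t = T (k + Suc (Suc e))"
  have k: "k \<in> {1..<n}" "k + Suc (Suc e) \<in> {1..<n}" using Suc by auto
  have nZ: "Z (- w) = - Z w" for w unfolding Z_def using Suc by (intro X_neg) auto
  have nk: "T k (- w) = - T k w" for w using k by (intro T_neg) auto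
  have nt: "t (- w) = - t w" for w unfolding t_def using k by (intro T_neg) auto
  have sk: "T k (T k w) = w" for w using k Tsq by auto
  have ih: "T k (Z (T k w)) = - Y w" for w unfolding Z_def Y_def using Suc by auto
  have kt: "T k (t w) = - t (T k w)" for w unfolding t_def using k by (intro Tanti) auto
  have e1: "X k (Suc (Suc (Suc e))) w = - Z (t (Z w))" for w
    by (simp add: X_Suc_Suc Z_def t_def)
  have e2: "X (Suc k) (Suc (Suc e)) w = - Y (t (Y w))" for w
    by (simp add: X_Suc_Suc Y_def t_def)
  have "T k (X k (Suc (Suc (Suc e))) (T k u)) = - T k (Z (T k (T k (t (T k (T k (Z (T k u))))))))"
    by (simp add: e1 nk sk)
  also have "\<dots> = - (- Y (T k (t (T k (- Y u)))))" by (simp only: ih)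
  also have "\<dots> = Y (t (Y u))" using Suc(2)
    by (simp add: kt nk nt sk X_neg Y_def)
  also have "\<dots> = - X (Suc k) (Suc (Suc e)) u" by (simp add: e2)
  finally show ?case .
qed

lemma conj_mid: "1 \<le> a \<Longrightarrow> a < k \<Longrightarrow> k + 1 < a + d \<Longrightarrow> a + d \<le> n \<Longrightarrow>
   T k (X a d (T k u)) = - X a d u"
proof (induction d arbitrary: u rule: tau_ind)
  case 1 then show ?case by simp
next
  case 2 then show ?case by simp
next
  case (3 e)
  define Z where "Z = X a (Suc e)"
  define t where "t = T (a + Suc e)"
  have k: "k \<in> {1..<n}" "a + Suc e \<in> {1..<n}" using 3 by auto
  have nZ: "Z (- w) = - Z w" for w unfolding Z_def using 3 by (intro X_neg) auto
  have nk: "T k (- w) = - T k w" for w using k by (intro T_neg) auto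
  have nt: "t (- w) = - t w" for w unfolding t_def using k by (intro T_neg) auto
  have sk: "T k (T k w) = w" for w using k Tsq by auto
  have e1: "X a (Suc (Suc e)) w = - Z (t (Z w))" for w
    by (simp add: X_Suc_Suc Z_def t_def)
  have split: "T k (X a (Suc (Suc e)) (T k u)) = - T k (Z (T k (T k (t (T k (T k (Z (T k u))))))))"
    by (simp add: e1 nk sk)
  show ?case
  proof (cases "a + Suc e = k + 1")
    case False
    then have "k + 1 < a + Suc e" using 3 by auto
    then have ih: "T k (Z (T k w)) = - Z w" for w unfolding Z_def using 3 by auto
    have kt: "T k (t w) = - t (T k w)" for w unfolding t_def using k \<open>k + 1 < a + Suc e\<close>
      by (intro Tanti) auto
    have "- T k (Z (T k (T k (t (T k (T k (Z (T k u)))))))) = - (- Z (T k (t (T k (- Z u)))))"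
      by (simp only: ih)
    also have "\<dots> = - X a (Suc (Suc e)) u" by (simp add: kt nk nt sk nZ e1)
    finally show ?thesis unfolding split .
  next
    case True
    then obtain f where f: "e = Suc f" "a + Suc f = k" using 3 by (cases e) auto
    define A where "A = X a (Suc f)"
    have fk: "1 \<le> Suc f" "a + Suc f < n" using f 3 by auto
    have nA: "A (- w) = - A w" for w unfolding A_def using 3 f by (intro X_neg) auto
    have sA: "A (A w) = w" for w unfolding A_def using 3 f by (intro X_sq) auto
    have br: "A (T k (A w)) = T k (A (T k w))" for w
      unfolding A_def using braid[OF _ fk(1) fk(2), of w] 3 f by auto
    have Zd0: "Z w = - A (T k (A w))" for w
      unfolding Z_def f(1) using f(2) by (simp add: X_Suc_Suc A_def)
    have Zd: "Z w = - T k (A (T k w))" for w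
      unfolding Z_def f(1) using br[of w] f(2) by (simp add: X_Suc_Suc A_def)
    have t': "t = T (Suc k)" unfolding t_def using True by simp
    have At: "A (t w) = - t (A w)" for w unfolding A_def t' using 3 f k
      by (intro T_far_anti) auto
    have "- T k (Z (T k (T k (t (T k (T k (Z (T k u)))))))) = - A (T k (t (T k (A u))))"
      by (simp add: Zd nk sk nA nt)
    also have "\<dots> = Z (t (Z u))"
      by (simp add: Zd0 nk nt nA sA At)
    also have "\<dots> = - X a (Suc (Suc e)) u" by (simp add: e1)
    finally show ?thesis unfolding split .
  qed
qed

abbreviation PI where "PI m \<equiv> pi_op T m"

lemma PI_eq: "PI m v = (\<Sum>j\<in>{1..<m}. X j (m - j) v)"
  by (simp add: pi_op_def tau_op_def)

lemma lin_PI: "m \<le> n \<Longrightarrow> lin (PI m)"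
proof -
  assume m: "m \<le> n"
  have "lin (\<lambda>v. \<Sum>j\<in>{1..<m}. X j (m - j) v)"
    by (rule lin_sumf) (use m in \<open>auto intro!: lin_X\<close>)
  moreover have "PI m = (\<lambda>v. \<Sum>j\<in>{1..<m}. X j (m - j) v)" by (simp add: PI_eq fun_eq_iff)
  ultimately show ?thesis by simp
qed

lemma PI_neg: "m \<le> n \<Longrightarrow> PI m (- u) = - PI m u"
  using lin_neg[OF lin_PI] .

lemma G2a: "i\<in>{1..<n} \<Longrightarrow> m < i \<Longrightarrow> T i (PI m u) = - PI m (T i u)"
proof -
  assume i: "i\<in>{1..<n}" and m: "m < i"
  have "PI m (T i u) = (\<Sum>j\<in>{1..<m}. X j (m - j) (T i u))" by (rule PI_eq)
  also have "\<dots> = (\<Sum>j\<in>{1..<m}. - T i (X j (m - j) u))"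
    by (rule sum.cong) (use i m in \<open>auto intro!: T_far_anti\<close>)
  also have "\<dots> = - T i (PI m u)"
    by (simp add: PI_eq lin_sum[OF lin_T[OF i]] sum_negf)
  finally show ?thesis by simp
qed

lemma G2b: "i\<in>{1..<n} \<Longrightarrow> i + 1 < m \<Longrightarrow> m \<le> n \<Longrightarrow> T i (PI m (T i u)) = - PI m u"
proof -
  assume i: "i\<in>{1..<n}" and m: "i + 1 < m" "m \<le> n"
  define g where "g j = X j (m - j) u" for j
  define sw where "sw j = (if j = i then i + 1 else if j = i + 1 then i else j)" for j
  have lT: "lin (T i)" using i by (rule lin_T)
  have sq: "T i (T i w) = w" for w using i Tsq by auto
  have key: "T i (X j (m - j) (T i u)) = - g (sw j)" if j: "j \<in> {1..<m}" for j
  proof -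
    consider "j < i" | "j = i" | "j = i + 1" | "i + 1 < j" by linarith
    then show ?thesis
    proof cases
      case 1 then show ?thesis using i m j by (simp add: g_def sw_def conj_mid)
    next
      case 2
      define e where "e = m - i - 2"
      have e: "m - i = Suc (Suc e)" using m unfolding e_def by arith
      have "T i (X i (Suc (Suc e)) (T i u)) = - X (Suc i) (Suc e) u"
        using i m e by (intro conj_first) auto
      moreover have "m - Suc i = Suc e" using e by simp
      ultimately show ?thesis using 2 e by (simp add: g_def sw_def)
    next
      case 3
      define e where "e = m - i - 2"
      have e: "m - i = Suc (Suc e)" using m unfolding e_def by arith
      have c: "T i (X i (Suc (Suc e)) (T i w)) = - X (Suc i) (Suc e) w" for w
        using i m e by (intro conj_first) auto
      have "m - Suc i = Suc e" using e by simp
      then have "T i (X j (m - j) (T i u)) = - T i (T i (X i (Suc (Suc e)) (T i (T i u))))"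
        using 3 c[of "T i u"] lin_neg[OF lT] by simp
      also have "\<dots> = - X i (m - i) u" using e by (simp add: sq)
      finally show ?thesis using 3 by (simp add: g_def sw_def)
    next
      case 4
      have "X j (m - j) (T i u) = - T i (X j (m - j) u)"
        using i m j 4 by (intro T_far_anti) auto
      then show ?thesis using 4 lin_neg[OF lT] by (simp add: g_def sw_def sq)
    qed
  qed
  have "T i (PI m (T i u)) = (\<Sum>j\<in>{1..<m}. T i (X j (m - j) (T i u)))"
    by (simp add: PI_eq lin_sum[OF lT])
  also have "\<dots> = (\<Sum>j\<in>{1..<m}. - g (sw j))" by (rule sum.cong) (auto simp: key)
  also have "\<dots> = - (\<Sum>j\<in>{1..<m}. g j)"
    unfolding sum_negf
    by (rule arg_cong[where f=uminus], rule sum.reindex_bij_witness[of _ sw sw]) (use i m in \<open>auto simp: sw_def\<close>)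
  also have "\<dots> = - PI m u" by (simp add: PI_eq g_def)
  finally show ?thesis .
qed

lemma G2: "i\<in>{1..<n} \<Longrightarrow> m \<le> n \<Longrightarrow> m \<noteq> i \<Longrightarrow> m \<noteq> i + 1 \<Longrightarrow> T i (PI m u) = - PI m (T i u)"
proof -
  assume i: "i\<in>{1..<n}" and m: "m \<le> n" "m \<noteq> i" "m \<noteq> i + 1"
  show ?thesis
  proof (cases "m < i")
    case True then show ?thesis using G2a i by blast
  next
    case False
    then have "i + 1 < m" using m by auto
    then have "T i (PI m (T i (T i u))) = - PI m (T i u)" using G2b i m by blast
    then show ?thesis using i Tsq by simp
  qed
qed

lemma G3: "i\<in>{1..<n} \<Longrightarrow> T i (PI i u) + PI (i+1) (T i u) = u"
proof -
  assume i: "i\<in>{1..<n}"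
  have lT: "lin (T i)" using i by (rule lin_T)
  have sq: "T i (T i w) = w" for w using i Tsq by auto
  have S: "{1..<i+1} = insert i {1..<i}" using i by auto
  have tm: "X j (Suc i - j) (T i u) = - T i (X j (i - j) u)" if j: "j \<in> {1..<i}" for j
  proof -
    obtain e where e: "i - j = Suc e" using j by (metis Suc_diff_Suc atLeastLessThan_iff)
    have ie: "Suc i - j = Suc (Suc e)" using e j by auto
    have je: "j + Suc e = i" using e j by auto
    have br: "X j (Suc e) (T i (X j (Suc e) w)) = T i (X j (Suc e) (T i w))" for w
      using braid[of j "Suc e" w] je j i by auto
    have "X j (Suc i - j) (T i u) = - X j (Suc e) (T i (X j (Suc e) (T i u)))"
      unfolding ie X_Suc_Suc je ..
    also have "\<dots> = - T i (X j (i - j) u)" by (simp add: br sq e)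
    finally show ?thesis .
  qed
  have "PI (i+1) (T i u) = (\<Sum>j\<in>{1..<i}. X j (i + 1 - j) (T i u)) + X i 1 (T i u)"
    unfolding PI_eq S by (simp add: add.commute)
  also have "\<dots> = (\<Sum>j\<in>{1..<i}. - T i (X j (i - j) u)) + u"
    by (simp add: tm sq)
  also have "\<dots> = - T i (PI i u) + u"
    by (simp add: PI_eq lin_sum[OF lT] sum_negf)
  finally show ?thesis by simp
qed

lemma G1: "l < m \<Longrightarrow> m \<le> n \<Longrightarrow> PI l (PI m u) = - PI m (PI l u)"
proof -
  assume lm: "l < m" "m \<le> n"
  have lP: "lin (PI m)" using lm by (intro lin_PI)
  have "PI l (PI m u) = (\<Sum>j\<in>{1..<l}. X j (l - j) (PI m u))" by (rule PI_eq)
  also have "\<dots> = (\<Sum>j\<in>{1..<l}. - PI m (X j (l - j) u))"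
  proof (rule sum.cong[OF refl])
    fix j assume j: "j \<in> {1..<l}"
    show "X j (l - j) (PI m u) = - PI m (X j (l - j) u)"
    proof (rule X_anti[OF lP])
      fix k w assume k: "k \<in> {j..<j + (l - j)}"
      show "T k (PI m w) = - PI m (T k w)" using k j lm by (intro G2) auto
    qed (use j lm in auto)
  qed
  also have "\<dots> = - PI m (\<Sum>j\<in>{1..<l}. X j (l - j) u)" by (simp only: sum_negf lin_sum[OF lP])
  also have "\<dots> = - PI m (PI l u)" by (simp only: PI_eq[of l u, symmetric])
  finally show ?thesis .
qed

definition sg :: "bool \<Rightarrow> 'v \<Rightarrow> 'v" where "sg b x = (if b then - x else x)"

lemma lin_sg: "lin f \<Longrightarrow> f (sg b x) = sg b (f x)"
  by (simp add: sg_def lin_neg)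
lemma sg_sg: "sg b (sg c x) = sg (b \<noteq> c) x"
  by (simp add: sg_def)
lemma sg_neg: "- sg b x = sg (\<not> b) x"
  by (simp add: sg_def)
lemma sg_op: "(\<lambda>x. sg b (f x)) = f \<or> (\<lambda>x. sg b (f x)) = uminus \<circ> f"
  by (cases b) (auto simp: sg_def fun_eq_iff)

primrec chd :: "nat \<Rightarrow> nat \<Rightarrow> 'v \<Rightarrow> 'v" where
  "chd m 0 = id"
| "chd m (Suc d) = T (m - d) \<circ> chd m d"

lemma lin_chd: "d \<le> m \<Longrightarrow> m < n \<Longrightarrow> lin (chd m d)"
  by (induction d) (auto intro!: lin_comp' lin_T simp: lin_id)

lemma ch1: "1 \<le> i \<Longrightarrow> i < m - d \<Longrightarrow> d \<le> m \<Longrightarrow> m < n \<Longrightarrow>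
  \<exists>b. \<forall>w. T i (chd m d w) = sg b (chd m d (T i w))"
proof (induction d)
  case 0 then show ?case by (auto simp: sg_def intro: exI[of _ False])
next
  case (Suc d)
  have "i < m - d" using Suc.prems by linarith
  then obtain b where b: "\<And>w. T i (chd m d w) = sg b (chd m d (T i w))" using Suc by auto
  have lT: "lin (T (m - d))" using Suc by (intro lin_T) auto
  have "T i (chd m (Suc d) w) = sg (\<not> b) (chd m (Suc d) (T i w))" for w
  proof -
    have "T i (chd m (Suc d) w) = - T (m - d) (T i (chd m d w))"
      using Suc by (simp, intro Tanti) auto
    also have "\<dots> = sg (\<not> b) (chd m (Suc d) (T i w))"
      by (simp add: b lin_sg[OF lT] sg_neg)
    finally show ?thesis .
  qed
  then show ?case by blast
qed

lemma ch2: "m - d + 1 < i \<Longrightarrow> i \<le> m \<Longrightarrow> d \<le> m \<Longrightarrow> m < n \<Longrightarrow>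
  \<exists>b. \<forall>w. T i (chd m d w) = sg b (chd m d (T (i - 1) w))"
proof (induction d)
  case 0 then show ?case by auto
next
  case (Suc d)
  have lT: "lin (T (m - d))" using Suc by (intro lin_T) auto
  show ?case
  proof (cases "m - d + 1 < i")
    case True
    then obtain b where b: "\<And>w. T i (chd m d w) = sg b (chd m d (T (i - 1) w))" using Suc by auto
    have "T i (chd m (Suc d) w) = sg (\<not> b) (chd m (Suc d) (T (i - 1) w))" for w
    proof -
      have "T i (chd m (Suc d) w) = - T (m - d) (T i (chd m d w))"
        using Suc True by (simp, intro Tanti) auto
      also have "\<dots> = sg (\<not> b) (chd m (Suc d) (T (i - 1) w))"
        by (simp add: b lin_sg[OF lT] sg_neg)
      finally show ?thesis .
    qed
    then show ?thesis by blast
  next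
    case False
    define k where "k = m - d"
    have ik: "i = k + 1" using False Suc unfolding k_def by auto
    obtain d' where d': "d = Suc d'" using Suc False by (cases d) auto
    have kk: "m - d' = k + 1" using d' Suc unfolding k_def by auto
    have k1: "1 \<le> k" "k + 1 < n" unfolding k_def using Suc.prems False d' by linarith+
    then have k: "k \<in> {1..<n}" "k + 1 \<in> {1..<n}" by auto
    have lk: "lin (T k)" "lin (T (Suc k))" using k by (auto intro: lin_T)
    have hk: "m - Suc d' = k" using d' unfolding k_def by simp
    have kd: "1 \<le> k" "k < m - d'" "d' \<le> m" "m < n" using kk k Suc d' by auto
    obtain b where b: "\<And>w. T k (chd m d' w) = sg b (chd m d' (T k w))"
      using ch1[OF kd] by auto
    have "T i (chd m (Suc d) w) = sg b (chd m (Suc d) (T (i - 1) w))" for w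
    proof -
      have "T i (chd m (Suc d) w) = T (k+1) (T k (T (k+1) (chd m d' w)))"
        by (simp add: ik d' kk hk)
      also have "\<dots> = T k (T (k+1) (T k (chd m d' w)))"
        using Tbraid[of k "chd m d' w"] k by auto
      also have "\<dots> = sg b (chd m (Suc d) (T (i - 1) w))"
        by (simp add: b lin_sg[OF lk(1)] lin_sg[OF lk(2)] ik d' kk hk)
      finally show ?thesis .
    qed
    then show ?thesis by blast
  qed
qed

primrec NF :: "nat \<Rightarrow> ('v \<Rightarrow> 'v) set" where
  "NF 0 = {id, uminus}"
| "NF (Suc m) = (\<lambda>(d, h). chd m d \<circ> h) ` ({..m} \<times> NF m)"

lemma finite_NF: "finite (NF m)"
  by (induction m) auto

lemma NF_closed: "m \<le> n \<Longrightarrow> id \<in> NF m \<and> (\<forall>g\<in>NF m. uminus \<circ> g \<in> NF m \<and> lin g) \<and>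
   (\<forall>g\<in>NF m. \<forall>i\<in>{1..<m}. T i \<circ> g \<in> NF m)"
proof (induction m)
  case 0
  have "uminus \<circ> uminus = (id :: 'v \<Rightarrow> 'v)" by (auto simp: fun_eq_iff)
  then show ?case by (auto simp: lin_id lin_uminus[OF lin_id(1)])
next
  case (Suc m)
  then have IH: "id \<in> NF m" "\<And>g. g \<in> NF m \<Longrightarrow> uminus \<circ> g \<in> NF m"
      "\<And>g. g \<in> NF m \<Longrightarrow> lin g" "\<And>g i. g \<in> NF m \<Longrightarrow> i\<in>{1..<m} \<Longrightarrow> T i \<circ> g \<in> NF m"
    and mn: "m < n" by (auto simp: id_def comp_def)
  have mem: "chd m d \<circ> h \<in> NF (Suc m)" if "d \<le> m" "h \<in> NF m" for d h
    using that by (auto intro!: image_eqI[where x="(d, h)"])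
  have memneg: "uminus \<circ> (chd m d \<circ> h) \<in> NF (Suc m)" if "d \<le> m" "h \<in> NF m" for d h
  proof -
    have "uminus \<circ> (chd m d \<circ> h) = chd m d \<circ> (uminus \<circ> h)"
      using lin_chd[OF that(1) mn] by (auto simp: fun_eq_iff lin_neg)
    then show ?thesis using mem[OF that(1) IH(2)[OF that(2)]] by simp
  qed
  have memsg: "(\<lambda>w. sg b (chd m d (h w))) \<in> NF (Suc m)" if "d \<le> m" "h \<in> NF m" for b d h
    using sg_op[of b "chd m d \<circ> h"] mem[OF that] memneg[OF that] by (auto simp: comp_def)
  have "id \<in> NF (Suc m)" using mem[OF _ IH(1), of 0] by simp
  moreover have "uminus \<circ> g \<in> NF (Suc m) \<and> lin g" if "g \<in> NF (Suc m)" for g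
    using that memneg lin_chd[OF _ mn] IH(3) by (auto intro: lin_comp')
  moreover have "T i \<circ> g \<in> NF (Suc m)" if g: "g \<in> NF (Suc m)" and i: "i \<in> {1..<Suc m}" for g i
  proof -
    obtain d h where dh: "d \<le> m" "h \<in> NF m" "g = chd m d \<circ> h" using g by auto
    consider "i < m - d" | "i = m - d" | "i = m - d + 1" | "m - d + 1 < i" by linarith
    then show ?thesis
    proof cases
      case 1
      then obtain b where b: "\<And>w. T i (chd m d w) = sg b (chd m d (T i w))"
        using ch1[of i m d] i dh mn by auto
      have "T i \<circ> g = (\<lambda>w. sg b (chd m d ((T i \<circ> h) w)))" by (simp add: dh fun_eq_iff b)
      then show ?thesis using memsg[OF dh(1) IH(4)[OF dh(2)]] 1 i by auto
    next
      case 2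
      then have "d < m" using i by auto
      then have "T i \<circ> g = chd m (Suc d) \<circ> h" using 2 by (simp add: dh comp_assoc)
      moreover have "chd m (Suc d) \<circ> h \<in> NF (Suc m)" by (intro mem) (use dh \<open>d < m\<close> in auto)
      ultimately show ?thesis by simp
    next
      case 3
      then obtain d' where d': "d = Suc d'" using i by (cases d) auto
      have id': "i = m - d'" using 3 d' dh by arith
      have "T i \<circ> g = chd m d' \<circ> h"
        using id' d' i mn dh by (auto simp: fun_eq_iff Tsq)
      then show ?thesis using mem[OF _ dh(2), of d'] d' dh by simp
    next
      case 4
      then obtain b where b: "\<And>w. T i (chd m d w) = sg b (chd m d (T (i - 1) w))"
        using ch2[of m d i] i dh mn by auto
      have "T i \<circ> g = (\<lambda>w. sg b (chd m d ((T (i - 1) \<circ> h) w)))" by (simp add: dh fun_eq_iff b)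
      moreover have "i - 1 \<in> {1..<m}" using 4 i by auto
      ultimately show ?thesis using memsg[OF dh(1) IH(4)[OF dh(2), of "i - 1"]] by (simp add: comp_def)
    qed
  qed
  ultimately show ?case by blast
qed

inductive_set Wg :: "('v \<Rightarrow> 'v) set" where
  Wid: "id \<in> Wg"
| WT: "g \<in> Wg \<Longrightarrow> i \<in> {1..<n} \<Longrightarrow> T i \<circ> g \<in> Wg"
| Wneg: "g \<in> Wg \<Longrightarrow> uminus \<circ> g \<in> Wg"

lemma Wg_NF: "g \<in> Wg \<Longrightarrow> g \<in> NF n"
  by (induction rule: Wg.induct) (use NF_closed[of n] in \<open>auto simp: id_def comp_def\<close>)

lemma finite_Wg: "finite Wg"
  using finite_subset[OF _ finite_NF[of n]] Wg_NF by blast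

lemma lin_Wg: "g \<in> Wg \<Longrightarrow> lin g"
proof (induction rule: Wg.induct)
  case Wid then show ?case by (rule lin_id)
next
  case (WT g i) then show ?case using lin_comp'[OF lin_T] by blast
next
  case (Wneg g) then show ?case using lin_comp'[OF lin_uminus[OF lin_id(1)]] by (simp add: comp_def lin_uminus)
qed

lemma Wg_comp: "g \<in> Wg \<Longrightarrow> h \<in> Wg \<Longrightarrow> g \<circ> h \<in> Wg"
  by (induction rule: Wg.induct) (auto simp: comp_assoc intro: Wg.intros)

lemma Wg_T: "i \<in> {1..<n} \<Longrightarrow> T i \<in> Wg"
  using WT[OF Wid] by simp

lemma Wg_rT: "g \<in> Wg \<Longrightarrow> i \<in> {1..<n} \<Longrightarrow> g \<circ> T i \<in> Wg"
  using Wg_comp Wg_T by blast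

lemma ip_exists: "\<exists>U ip. vs.subspace U \<and> v0 \<in> U \<and> (\<forall>i\<in>{1..<n}. \<forall>u\<in>U. T i u \<in> U) \<and>
  (\<forall>u\<in>U. \<forall>w\<in>U. \<forall>z\<in>U. ip (u + w) z = ip u z + ip w z) \<and>
  (\<forall>c. \<forall>u\<in>U. \<forall>w\<in>U. ip (smul c u) w = c * ip u w) \<and>
  (\<forall>u\<in>U. \<forall>w\<in>U. ip w u = cnj (ip u w)) \<and>
  (\<forall>u\<in>U. ip u u = 0 \<longrightarrow> u = 0) \<and>
  (\<forall>i\<in>{1..<n}. \<forall>u\<in>U. \<forall>w\<in>U. ip (T i u) w = ip u (T i w))"
proof -
  define S where "S = (\<lambda>g. g v0) ` Wg"
  define U where "U = vs.span S"
  have finS: "finite S" unfolding S_def using finite_Wg by simp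
  have inv: "g u \<in> U" if g: "g \<in> Wg" and u: "u \<in> U" for g u
  proof -
    have lg: "lin g" using g by (rule lin_Wg)
    from u[unfolded U_def] show ?thesis
    proof (induction rule: vs.span_induct_alt)
      case base then show ?case by (simp add: lin_zero[OF lg] U_def vs.span_zero)
    next
      case (step c x y)
      then obtain h where h: "h \<in> Wg" "x = h v0" unfolding S_def by auto
      have "g x \<in> S" unfolding S_def h(2) using Wg_comp[OF g h(1)] by (auto intro!: image_eqI[where x="g \<circ> h"])
      then have "g x \<in> U" unfolding U_def by (rule vs.span_base)
      then show ?case using step by (simp add: lin_add[OF lg] lin_scale[OF lg] U_def vs.span_add vs.span_scale)
    qed
  qed
  obtain B where B: "B \<subseteq> S" "vs.independent B" "S \<subseteq> vs.span B"
    using vs.maximal_independent_subset[of S] by blast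
  have finB: "finite B" using finite_subset[OF B(1) finS] .
  have UB: "U = vs.span B" unfolding U_def
    using B by (metis vs.span_eq vs.span_superset order.trans)
  define rep where "rep = vs.representation B"
  define bt where "bt u w = (\<Sum>b\<in>B. rep u b * cnj (rep w b))" for u w
  define ip where "ip u w = (\<Sum>g\<in>Wg. bt (g u) (g w))" for u w
  have rep_add: "rep (u + w) b = rep u b + rep w b" if "u \<in> U" "w \<in> U" for u w b
    using vs.representation_add[OF B(2)] that unfolding rep_def UB by simp
  have rep_scale: "rep (smul c u) b = c * rep u b" if "u \<in> U" for u c b
    using vs.representation_scale[OF B(2)] that unfolding rep_def UB by simp
  have v0U: "v0 \<in> U" unfolding U_def S_def by (rule vs.span_base) (auto intro!: image_eqI[where x=id] Wid)
  have subU: "vs.subspace U" unfolding U_def by simp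
  have addU: "u + w \<in> U" if "u \<in> U" "w \<in> U" for u w using that unfolding U_def by (rule vs.span_add)
  have scU: "smul c u \<in> U" if "u \<in> U" for c u using that unfolding U_def by (rule vs.span_scale)
  have P1: "ip (u + w) z = ip u z + ip w z" if "u \<in> U" "w \<in> U" "z \<in> U" for u w z
    unfolding ip_def bt_def
    using that by (simp add: lin_add[OF lin_Wg] rep_add inv distrib_right sum.distrib)
  have P2: "ip (smul c u) w = c * ip u w" if "u \<in> U" "w \<in> U" for c u w
    unfolding ip_def bt_def
    using that by (simp add: lin_scale[OF lin_Wg] rep_scale inv sum_distrib_left mult.assoc)
  have P3: "ip w u = cnj (ip u w)" for u w
    unfolding ip_def bt_def by (simp add: mult.commute)
  have P4: "u = 0" if "u \<in> U" "ip u u = 0" for u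
  proof -
    have nn: "bt z z = of_real (\<Sum>b\<in>B. (cmod (rep z b))\<^sup>2)" for z
      unfolding bt_def of_real_sum by (rule sum.cong[OF refl]) (simp only: complex_norm_square)
    have "ip u u = of_real (\<Sum>g\<in>Wg. \<Sum>b\<in>B. (cmod (rep (g u) b))\<^sup>2)"
      unfolding ip_def nn by simp
    then have "complex_of_real (\<Sum>g\<in>Wg. \<Sum>b\<in>B. (cmod (rep (g u) b))\<^sup>2) = 0" using that(2) by simp
    then have "(\<Sum>g\<in>Wg. \<Sum>b\<in>B. (cmod (rep (g u) b))\<^sup>2) = 0" by (simp only: of_real_eq_0_iff)
    then have "\<forall>g\<in>Wg. (\<Sum>b\<in>B. (cmod (rep (g u) b))\<^sup>2) = 0"
      by (subst (asm) sum_nonneg_eq_0_iff[OF finite_Wg]) (auto intro: sum_nonneg)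
    then have "(\<Sum>b\<in>B. (cmod (rep (id u) b))\<^sup>2) = 0" using Wid by blast
    then have "\<forall>b\<in>B. rep u b = 0"
      by (subst (asm) sum_nonneg_eq_0_iff[OF finB]) auto
    then have "(\<Sum>b\<in>B. smul (rep u b) b) = 0" by simp
    moreover have "(\<Sum>b\<in>B. smul (rep u b) b) = u"
      unfolding rep_def by (rule vs.sum_representation_eq) (use B(2) that(1) finB UB in auto)
    ultimately show ?thesis by simp
  qed
  have P5: "ip (T i u) w = ip u (T i w)" if i: "i \<in> {1..<n}" and "u \<in> U" "w \<in> U" for i u w
  proof -
    have "ip (T i u) w = (\<Sum>g\<in>Wg. bt ((g \<circ> T i) u) ((g \<circ> T i) (T i w)))"
      unfolding ip_def using Tsq[OF i] by simp
    also have "\<dots> = (\<Sum>g\<in>Wg. bt (g u) (g (T i w)))"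
      by (rule sum.reindex_bij_witness[of _ "\<lambda>g. g \<circ> T i" "\<lambda>g. g \<circ> T i"])
         (auto simp: comp_assoc Wg_rT[OF _ i] fun_eq_iff Tsq[OF i])
    finally show ?thesis unfolding ip_def .
  qed
  have TU: "T i u \<in> U" if "i \<in> {1..<n}" "u \<in> U" for i u using inv[OF Wg_T] that by blast
  show ?thesis
    by (rule exI[of _ U], rule exI[of _ ip]) (use subU v0U TU P1 P2 P3 P4 P5 in blast)
qed

context
  fixes i assumes i: "i \<in> {1..<n}"
begin

lemma li: "lin (T i)" "lin (PI i)" "lin (PI (Suc i))" using i by (auto intro: lin_T lin_PI)

lemma F1: "T i (PI i u) + PI (Suc i) (T i u) = u"
  using G3[OF i] by simp

lemma F1': "PI i (T i u) + T i (PI (Suc i) u) = u"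
proof -
  have "T i (PI i (T i u)) + PI (Suc i) u = T i u" using F1[of "T i u"] i Tsq by simp
  then have "T i (T i (PI i (T i u)) + PI (Suc i) u) = T i (T i u)" by simp
  then show ?thesis using i Tsq by (simp add: lin_add[OF li(1)])
qed

lemma F2: "PI i (PI (Suc i) u) = - PI (Suc i) (PI i u)"
  using G1[of i "Suc i"] i by auto

lemma x2y: "PI i (PI i (PI (Suc i) u)) = PI (Suc i) (PI i (PI i u))"
  by (simp add: F2 lin_neg[OF li(2)] lin_neg[OF li(3)])

lemma y2x: "PI (Suc i) (PI (Suc i) (PI i u)) = PI i (PI (Suc i) (PI (Suc i) u))"
  by (metis F2 lin_neg[OF li(2)] lin_neg[OF li(3)] minus_minus)

lemma x2t: "PI i (PI i (T i u)) = PI i u - PI (Suc i) u + T i (PI (Suc i) (PI (Suc i) u))"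
proof -
  have a: "PI i (T i w) = w - T i (PI (Suc i) w)" for w using F1'[of w] by (simp add: eq_diff_eq)
  have b: "T i (PI (Suc i) w) = w - PI i (T i w)" for w using F1'[of w] by (simp add: eq_diff_eq add.commute)
  have "PI i (PI i (T i u)) = PI i u - PI i (T i (PI (Suc i) u))" by (simp add: a lin_diff[OF li(2)])
  also have "\<dots> = PI i u - (PI (Suc i) u - T i (PI (Suc i) (PI (Suc i) u)))" by (simp only: a)
  finally show ?thesis by simp
qed

lemma y2t: "PI (Suc i) (PI (Suc i) (T i u)) = PI (Suc i) u - PI i u + T i (PI i (PI i u))"
proof -
  have a: "PI (Suc i) (T i w) = w - T i (PI i w)" for w using F1[of w] by (simp add: eq_diff_eq add.commute)
  have "PI (Suc i) (PI (Suc i) (T i u)) = PI (Suc i) u - PI (Suc i) (T i (PI i u))" by (simp add: a lin_diff[OF li(3)])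
  also have "\<dots> = PI (Suc i) u - (PI i u - T i (PI i (PI i u)))" by (simp only: a)
  finally show ?thesis by simp
qed

lemma txy: "T i (PI i u - PI (Suc i) u) = PI i (T i u) - PI (Suc i) (T i u)"
proof -
  have a: "PI (Suc i) (T i w) = w - T i (PI i w)" for w using F1[of w] by (simp add: eq_diff_eq add.commute)
  have b: "PI i (T i w) = w - T i (PI (Suc i) w)" for w using F1'[of w] by (simp add: eq_diff_eq)
  show ?thesis by (simp add: a b lin_diff[OF li(1)])
qed

lemma xysq: "PI i (PI i u - PI (Suc i) u) - PI (Suc i) (PI i u - PI (Suc i) u) =
   PI i (PI i u) + PI (Suc i) (PI (Suc i) u)"
  by (simp add: lin_diff[OF li(2)] lin_diff[OF li(3)] F2)

end

lemma F3a: "i \<in> {1..<n} \<Longrightarrow> m \<le> n \<Longrightarrow> m \<noteq> i \<Longrightarrow> m \<noteq> Suc i \<Longrightarrow>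
   PI m (PI m (T i u)) = T i (PI m (PI m u))"
  using G2[of i m] lin_neg[OF lin_PI[of m]] by simp

lemma F3b: "l \<le> n \<Longrightarrow> m \<le> n \<Longrightarrow> l \<noteq> m \<Longrightarrow> PI m (PI m (PI l u)) = PI l (PI m (PI m u))"
proof -
  assume lm: "l \<le> n" "m \<le> n" "l \<noteq> m"
  have nl: "PI l (- z) = - PI l z" for z using lm by (intro PI_neg)
  have nm: "PI m (- z) = - PI m z" for z using lm by (intro PI_neg)
  show ?thesis
  proof (cases "l < m")
    case True
    then have a: "PI l (PI m z) = - PI m (PI l z)" for z using G1 lm by blast
    show ?thesis by (metis a nl nm minus_minus)
  next
    case False
    then have a: "PI m (PI l z) = - PI l (PI m z)" for z using G1 lm by (metis linorder_neqE_nat)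
    show ?thesis by (simp add: a nl nm)
  qed
qed

lemma swap_nonzero:
  assumes i: "i \<in> {1..<n}" and v: "v \<in> pi_eigenspace smul n T a" "v \<noteq> 0"
    and ne: "a i \<noteq> a (Suc i)" and nc: "a i + a (Suc i) \<noteq> (a i - a (Suc i))^2"
  shows "pi_eigenspace smul n T (a(i := a (Suc i), Suc i := a i)) \<noteq> {0}"
proof -
  define \<alpha> where "\<alpha> = a i"
  define \<beta> where "\<beta> = a (Suc i)"
  define c where "c = 1 / (\<alpha> - \<beta>)"
  have ab: "\<alpha> \<noteq> \<beta>" using ne by (simp add: \<alpha>_def \<beta>_def)
  have ev: "PI m (PI m v) = smul (a m) v" if "m \<in> {1..n}" for m
    using v(1) that unfolding pi_eigenspace_def by auto
  have xv: "PI i (PI i v) = smul \<alpha> v" using ev[of i] i by (simp add: \<alpha>_def)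
  have yv: "PI (Suc i) (PI (Suc i) v) = smul \<beta> v" using ev[of "Suc i"] i by (simp add: \<beta>_def)
  note L = li[OF i]
  define u where "u = PI i v - PI (Suc i) v"
  define w where "w = T i v - smul c u"
  have xu: "PI i (PI i u) = smul \<alpha> u"
    unfolding u_def by (simp add: lin_diff[OF L(2)] x2y[OF i] xv lin_scale[OF L(2)] lin_scale[OF L(3)] vs.scale_right_diff_distrib)
  have yu: "PI (Suc i) (PI (Suc i) u) = smul \<beta> u"
    unfolding u_def by (simp add: lin_diff[OF L(3)] y2x[OF i] yv lin_scale[OF L(2)] lin_scale[OF L(3)] vs.scale_right_diff_distrib)
  have c1: "c * \<alpha> = 1 + \<beta> * c" using ab by (simp add: c_def field_simps)
  have c2: "c * \<beta> = \<alpha> * c - 1" using ab by (simp add: c_def field_simps)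
  have xw: "PI i (PI i w) = smul \<beta> w"
  proof -
    have "PI i (PI i w) = u + smul \<beta> (T i v) - smul (c * \<alpha>) u"
      unfolding w_def by (simp add: lin_diff[OF L(2)] lin_scale[OF L(2)] x2t[OF i] yv lin_scale[OF L(1)] xu u_def[symmetric])
    also have "\<dots> = smul \<beta> w"
      unfolding c1 w_def by (simp add: vs.scale_left_distrib vs.scale_right_diff_distrib algebra_simps)
    finally show ?thesis .
  qed
  have yw: "PI (Suc i) (PI (Suc i) w) = smul \<alpha> w"
  proof -
    have "PI (Suc i) (PI (Suc i) w) = - u + smul \<alpha> (T i v) - smul (c * \<beta>) u"
      unfolding w_def by (simp add: lin_diff[OF L(3)] lin_scale[OF L(3)] y2t[OF i] xv lin_scale[OF L(1)] yu) (simp add: u_def)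
    also have "\<dots> = smul \<alpha> w"
      unfolding c2 w_def by (simp add: vs.scale_left_diff_distrib vs.scale_right_diff_distrib algebra_simps)
    finally show ?thesis .
  qed
  have mw: "PI m (PI m w) = smul (a m) w" if m: "m \<in> {1..n}" "m \<noteq> i" "m \<noteq> Suc i" for m
  proof -
    have lm: "lin (PI m)" using m by (intro lin_PI) auto
    have "PI m (PI m u) = smul (a m) u"
      unfolding u_def using m i
      by (simp add: lin_diff[OF lm] F3b[of i m] F3b[of "Suc i" m] ev lin_scale[OF L(2)] lin_scale[OF L(3)] vs.scale_right_diff_distrib)
    moreover have "PI m (PI m (T i v)) = smul (a m) (T i v)"
      using m i by (simp add: F3a ev lin_scale[OF L(1)])
    ultimately show ?thesis unfolding w_def
      by (simp add: lin_diff[OF lm] lin_scale[OF lm] vs.scale_right_diff_distrib vs.scale_left_commute)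
  qed
  have wne: "w \<noteq> 0"
  proof
    assume "w = 0"
    then have tv: "T i v = smul c u" unfolding w_def by simp
    have "v = T i (T i v)" using Tsq i by simp
    also have "\<dots> = smul c (T i u)" by (simp add: tv lin_scale[OF L(1)])
    also have "\<dots> = smul c (PI i (T i v) - PI (Suc i) (T i v))" unfolding u_def txy[OF i] ..
    also have "\<dots> = smul (c * c) (PI i u - PI (Suc i) u)"
      by (simp add: tv lin_scale[OF L(2)] lin_scale[OF L(3)] vs.scale_right_diff_distrib)
    also have "\<dots> = smul (c * c * (\<alpha> + \<beta>)) v"
      unfolding u_def xysq[OF i] xv yv by (simp add: vs.scale_left_distrib vs.scale_right_distrib distrib_left)
    finally have "smul 1 v = smul (c * c * (\<alpha> + \<beta>)) v" by simp
    then have "c * c * (\<alpha> + \<beta>) = 1" using v(2) vs.scale_cancel_right by metis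
    then have "\<alpha> + \<beta> = (\<alpha> - \<beta>)^2" using ab by (simp add: c_def field_simps power2_eq_square)
    then show False using nc by (simp add: \<alpha>_def \<beta>_def)
  qed
  have "w \<in> pi_eigenspace smul n T (a(i := a (Suc i), Suc i := a i))"
    unfolding pi_eigenspace_def
  proof (intro CollectI ballI)
    fix m assume m: "m \<in> {1..n}"
    show "PI m (PI m w) = smul ((a(i := a (Suc i), Suc i := a i)) m) w"
      using xw yw mw[OF m] by (cases "m = i"; cases "m = Suc i") (auto simp: \<alpha>_def \<beta>_def)
  qed
  then show ?thesis using wne by auto
qed

lemma diff_eig: assumes i: "i \<in> {1..<n}"
  and xp: "PI i (PI i p) = smul a p" and yp: "PI (Suc i) (PI (Suc i) p) = smul b p"
  shows "PI i (PI i (PI i p - PI (Suc i) p)) = smul a (PI i p - PI (Suc i) p)"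
    "PI (Suc i) (PI (Suc i) (PI i p - PI (Suc i) p)) = smul b (PI i p - PI (Suc i) p)"
  using li[OF i] by (simp_all add: lin_diff x2y[OF i] y2x[OF i] xp yp lin_scale vs.scale_right_diff_distrib)

lemma w_eig: assumes i: "i \<in> {1..<n}"
  and xv: "PI i (PI i v) = smul \<alpha> v" and yv: "PI (Suc i) (PI (Suc i) v) = smul \<beta> v" and ab: "\<alpha> \<noteq> \<beta>"
  and w: "w = T i v - smul (1 / (\<alpha> - \<beta>)) (PI i v - PI (Suc i) v)"
  shows "PI i (PI i w) = smul \<beta> w" "PI (Suc i) (PI (Suc i) w) = smul \<alpha> w"
    "T i w = smul (1 - (1 / (\<alpha> - \<beta>)) * (1 / (\<alpha> - \<beta>)) * (\<alpha> + \<beta>)) v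
        - smul (1 / (\<alpha> - \<beta>)) (PI i w - PI (Suc i) w)"
proof -
  define c where "c = 1 / (\<alpha> - \<beta>)"
  note L = li[OF i]
  define u where "u = PI i v - PI (Suc i) v"
  have w': "w = T i v - smul c u" unfolding w c_def u_def ..
  have xu: "PI i (PI i u) = smul \<alpha> u" and yu: "PI (Suc i) (PI (Suc i) u) = smul \<beta> u"
    unfolding u_def using diff_eig[OF i xv yv] by auto
  have c1: "c * \<alpha> = 1 + \<beta> * c" using ab by (simp add: c_def field_simps)
  have c2: "c * \<beta> = \<alpha> * c - 1" using ab by (simp add: c_def field_simps)
  show "PI i (PI i w) = smul \<beta> w"
  proof -
    have "PI i (PI i w) = u + smul \<beta> (T i v) - smul (c * \<alpha>) u"
      unfolding w' by (simp add: lin_diff[OF L(2)] lin_scale[OF L(2)] x2t[OF i] yv lin_scale[OF L(1)] xu u_def[symmetric])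
    also have "\<dots> = smul \<beta> w"
      unfolding c1 w' by (simp add: vs.scale_left_distrib vs.scale_right_diff_distrib algebra_simps)
    finally show ?thesis .
  qed
  show "PI (Suc i) (PI (Suc i) w) = smul \<alpha> w"
  proof -
    have "PI (Suc i) (PI (Suc i) w) = - u + smul \<alpha> (T i v) - smul (c * \<beta>) u"
      unfolding w' by (simp add: lin_diff[OF L(3)] lin_scale[OF L(3)] y2t[OF i] xv lin_scale[OF L(1)] yu) (simp add: u_def)
    also have "\<dots> = smul \<alpha> w"
      unfolding c2 w' by (simp add: vs.scale_left_diff_distrib vs.scale_right_diff_distrib algebra_simps)
    finally show ?thesis .
  qed
  have tv: "T i v = w + smul c u" unfolding w' by simp
  have "T i w = T i (T i v) - smul c (T i u)" unfolding w' by (simp add: lin_diff[OF L(1)] lin_scale[OF L(1)])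
  also have "\<dots> = v - smul c (PI i (T i v) - PI (Suc i) (T i v))" unfolding u_def txy[OF i] using Tsq i by simp
  also have "\<dots> = v - smul c ((PI i w - PI (Suc i) w) + smul c (PI i u - PI (Suc i) u))"
    unfolding tv by (simp add: lin_add[OF L(2)] lin_add[OF L(3)] lin_scale[OF L(2)] lin_scale[OF L(3)] vs.scale_right_diff_distrib algebra_simps)
  also have "PI i u - PI (Suc i) u = smul (\<alpha> + \<beta>) v"
    unfolding u_def xysq[OF i] xv yv by (simp add: vs.scale_left_distrib)
  finally show "T i w = smul (1 - (1 / (\<alpha> - \<beta>)) * (1 / (\<alpha> - \<beta>)) * (\<alpha> + \<beta>)) v
        - smul (1 / (\<alpha> - \<beta>)) (PI i w - PI (Suc i) w)"
    unfolding c_def[symmetric] by (simp add: vs.scale_right_distrib vs.scale_left_diff_distrib algebra_simps)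
qed

end

locale herm = spinops smul n T for smul :: "complex \<Rightarrow> 'v::ab_group_add \<Rightarrow> 'v" and n T +
  fixes U :: "'v set" and ip :: "'v \<Rightarrow> 'v \<Rightarrow> complex"
  assumes subU: "vs.subspace U" and TU: "\<And>i u. i\<in>{1..<n} \<Longrightarrow> u\<in>U \<Longrightarrow> T i u \<in> U"
  and ip_add: "\<And>u w z. u\<in>U \<Longrightarrow> w\<in>U \<Longrightarrow> z\<in>U \<Longrightarrow> ip (u + w) z = ip u z + ip w z"
  and ip_scale: "\<And>c u w. u\<in>U \<Longrightarrow> w\<in>U \<Longrightarrow> ip (smul c u) w = c * ip u w"
  and ip_sym: "\<And>u w. u\<in>U \<Longrightarrow> w\<in>U \<Longrightarrow> ip w u = cnj (ip u w)"
  and ip_pos: "\<And>u. u\<in>U \<Longrightarrow> ip u u = 0 \<Longrightarrow> u = 0"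
  and ip_T: "\<And>i u w. i\<in>{1..<n} \<Longrightarrow> u\<in>U \<Longrightarrow> w\<in>U \<Longrightarrow> ip (T i u) w = ip u (T i w)"
begin

lemma U0: "0 \<in> U" using vs.subspace_0[OF subU] .
lemma Uadd: "u \<in> U \<Longrightarrow> w \<in> U \<Longrightarrow> u + w \<in> U" using vs.subspace_add[OF subU] .
lemma Uscale: "u \<in> U \<Longrightarrow> smul c u \<in> U" using vs.subspace_scale[OF subU] .
lemma Uneg: "u \<in> U \<Longrightarrow> - u \<in> U" using vs.subspace_neg[OF subU] .
lemma Udiff: "u \<in> U \<Longrightarrow> w \<in> U \<Longrightarrow> u - w \<in> U" using vs.subspace_diff[OF subU] .
lemma Usum: "(\<And>j. j \<in> S \<Longrightarrow> f j \<in> U) \<Longrightarrow> sum f S \<in> U" using vs.subspace_sum[OF subU] .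

lemma XU: "1 \<le> a \<Longrightarrow> a + d \<le> n \<Longrightarrow> u \<in> U \<Longrightarrow> X a d u \<in> U"
proof (induction d arbitrary: u rule: tau_ind)
  case 1 then show ?case by (simp add: U0)
next
  case 2 then show ?case by (simp add: TU)
next
  case (3 d) then show ?case by (simp add: X_Suc_Suc Uneg TU)
qed

lemma PIU: "m \<le> n \<Longrightarrow> u \<in> U \<Longrightarrow> PI m u \<in> U"
  unfolding PI_eq by (rule Usum) (auto intro: XU)

lemma ip_zero1: "w \<in> U \<Longrightarrow> ip 0 w = 0"
  using ip_scale[of w w 0] by simp
lemma ip_neg1: "u \<in> U \<Longrightarrow> w \<in> U \<Longrightarrow> ip (- u) w = - ip u w"
  using ip_scale[of u w "-1"] by (simp add: vs.scale_minus_left)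
lemma ip_diff1: "u \<in> U \<Longrightarrow> w \<in> U \<Longrightarrow> z \<in> U \<Longrightarrow> ip (u - w) z = ip u z - ip w z"
  using ip_add[of u "-w" z] ip_neg1[of w z] Uneg by simp
lemma ip_zero2: "w \<in> U \<Longrightarrow> ip w 0 = 0"
  using ip_sym[of 0 w] ip_zero1 U0 by simp
lemma ip_neg2: "u \<in> U \<Longrightarrow> w \<in> U \<Longrightarrow> ip w (- u) = - ip w u"
  using ip_sym[of "-u" w] ip_sym[of u w] ip_neg1 Uneg by simp
lemma ip_scale2: "u \<in> U \<Longrightarrow> w \<in> U \<Longrightarrow> ip w (smul c u) = cnj c * ip w u"
  using ip_sym[of "smul c u" w] ip_sym[of u w] ip_scale Uscale by simp
lemma ip_sum1: "finite S \<Longrightarrow> (\<And>j. j \<in> S \<Longrightarrow> f j \<in> U) \<Longrightarrow> w \<in> U \<Longrightarrow> ip (sum f S) w = (\<Sum>j\<in>S. ip (f j) w)"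
  by (induction S rule: finite_induct) (auto simp: ip_zero1 ip_add Usum)

lemma X_sa: "1 \<le> a \<Longrightarrow> a + d \<le> n \<Longrightarrow> u \<in> U \<Longrightarrow> w \<in> U \<Longrightarrow> ip (X a d u) w = ip u (X a d w)"
proof (induction d arbitrary: u w rule: tau_ind)
  case 1 then show ?case by (simp add: ip_zero1 ip_zero2)
next
  case 2 then show ?case by (simp add: ip_T)
next
  case (3 d)
  have XU': "X a (Suc d) z \<in> U" if "z \<in> U" for z using 3 that by (intro XU) auto
  have TU': "T (Suc (a + d)) z \<in> U" if "z \<in> U" for z using 3 that by (intro TU) auto
  have "ip (X a (Suc (Suc d)) u) w = - ip (X a (Suc d) (T (Suc (a + d)) (X a (Suc d) u))) w"
    using 3 by (simp add: X_Suc_Suc ip_neg1 XU' TU')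
  also have "\<dots> = - ip u (X a (Suc d) (T (Suc (a + d)) (X a (Suc d) w)))"
    using 3 by (simp add: XU' TU' ip_T)
  also have "\<dots> = ip u (X a (Suc (Suc d)) w)"
    using 3 by (simp add: X_Suc_Suc ip_neg2 XU' TU')
  finally show ?case .
qed

lemma PI_sa: "m \<le> n \<Longrightarrow> u \<in> U \<Longrightarrow> w \<in> U \<Longrightarrow> ip (PI m u) w = ip u (PI m w)"
proof -
  assume m: "m \<le> n" and uw: "u \<in> U" "w \<in> U"
  have "ip (PI m u) w = (\<Sum>j\<in>{1..<m}. ip (X j (m - j) u) w)"
    unfolding PI_eq using m uw by (intro ip_sum1) (auto intro: XU)
  also have "\<dots> = (\<Sum>j\<in>{1..<m}. cnj (ip (X j (m - j) w) u))"
    using m uw by (intro sum.cong refl) (auto simp: X_sa XU ip_sym[of u])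
  also have "\<dots> = cnj (ip (PI m w) u)"
    unfolding PI_eq using m uw by (subst ip_sum1) (auto intro: XU)
  also have "\<dots> = ip u (PI m w)" using ip_sym[of u "PI m w"] m uw PIU by simp
  finally show ?thesis .
qed

lemma sq_sa: "m \<le> n \<Longrightarrow> u \<in> U \<Longrightarrow> w \<in> U \<Longrightarrow> ip (PI m (PI m u)) w = ip u (PI m (PI m w))"
  by (simp add: PI_sa PIU)

lemma real_eig: "m \<le> n \<Longrightarrow> u \<in> U \<Longrightarrow> u \<noteq> 0 \<Longrightarrow> PI m (PI m u) = smul \<alpha> u \<Longrightarrow> cnj \<alpha> = \<alpha>"
proof -
  assume m: "m \<le> n" and u: "u \<in> U" "u \<noteq> 0" and e: "PI m (PI m u) = smul \<alpha> u"
  have "\<alpha> * ip u u = cnj \<alpha> * ip u u"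
    using sq_sa[OF m u(1) u(1)] e by (simp add: ip_scale ip_scale2 u)
  moreover have "ip u u \<noteq> 0" using ip_pos u by blast
  ultimately show ?thesis by simp
qed

lemma orth: "m \<le> n \<Longrightarrow> u \<in> U \<Longrightarrow> w \<in> U \<Longrightarrow> PI m (PI m u) = smul \<alpha> u \<Longrightarrow> PI m (PI m w) = smul \<beta> w \<Longrightarrow>
  \<alpha> \<noteq> cnj \<beta> \<Longrightarrow> ip u w = 0"
proof -
  assume m: "m \<le> n" and uw: "u \<in> U" "w \<in> U" and e: "PI m (PI m u) = smul \<alpha> u" "PI m (PI m w) = smul \<beta> w"
    and ne: "\<alpha> \<noteq> cnj \<beta>"
  have "\<alpha> * ip u w = cnj \<beta> * ip u w"
    using sq_sa[OF m uw] e by (simp add: ip_scale ip_scale2 uw)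
  then show ?thesis using ne by simp
qed

lemma H1: assumes i: "i \<in> {1..<n}" and v: "v \<in> U" "v \<noteq> 0"
  and xv: "PI i (PI i v) = smul \<alpha> v" and yv: "PI (Suc i) (PI (Suc i) v) = smul \<alpha> v"
  shows False
proof -
  note L = li[OF i]
  have iU: "i \<le> n" "Suc i \<le> n" using i by auto
  have xU: "PI i z \<in> U" and yU: "PI (Suc i) z \<in> U" and tU: "T i z \<in> U" if "z \<in> U" for z
    using that i by (auto intro: PIU TU)
  define q where "q = PI i v - PI (Suc i) v"
  have qU: "q \<in> U" unfolding q_def using v by (intro Udiff xU yU)
  have tvU: "T i v \<in> U" using v tU by auto
  have xq: "PI i (PI i q) = smul \<alpha> q" unfolding q_def using diff_eig[OF i xv yv] by auto
  have xtv: "PI i (PI i (T i v)) - smul \<alpha> (T i v) = q"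
    unfolding q_def by (simp add: x2t[OF i] yv lin_scale[OF L(1)])
  have ra: "cnj \<alpha> = \<alpha>" using real_eig[OF iU(1) v xv] .
  have xxtU: "PI i (PI i (T i v)) \<in> U" using tvU xU by blast
  have "ip q q = ip (PI i (PI i (T i v)) - smul \<alpha> (T i v)) q" using xtv by simp
  also have "\<dots> = ip (PI i (PI i (T i v))) q - \<alpha> * ip (T i v) q"
    using tvU qU xxtU by (simp add: ip_diff1 ip_scale Uscale)
  also have "\<dots> = 0"
    using sq_sa[OF iU(1) tvU qU] by (simp add: xq ip_scale2 tvU qU ra)
  finally have "q = 0" using ip_pos qU by blast
  then have xy: "PI i v = PI (Suc i) v" unfolding q_def by simp
  have "smul \<alpha> v = - smul \<alpha> v"
    using F2[OF i, of v] xv yv by (simp add: xy)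
  then have "smul \<alpha> v + smul \<alpha> v = 0" using eq_neg_iff_add_eq_0 by blast
  then have "smul (\<alpha> + \<alpha>) v = 0" by (simp only: vs.scale_left_distrib)
  then have "\<alpha> + \<alpha> = 0" using v(2) vs.scale_eq_0_iff by blast
  then have a0: "\<alpha> = 0" by simp
  have "ip (PI i v) (PI i v) = ip (PI i (PI i v)) v" using PI_sa[OF iU(1) xU[OF v(1)] v(1)] by simp
  also have "\<dots> = 0" using xv a0 v by (simp add: ip_zero1)
  finally have x0: "PI i v = 0" using ip_pos xU v by blast
  then have y0: "PI (Suc i) v = 0" using xy by simp
  have "PI (Suc i) (T i v) = v" using F1[OF i, of v] x0 lin_zero[OF L(1)] by simp
  then have "ip v v = ip (PI (Suc i) (T i v)) v" by simp
  also have "\<dots> = ip (T i v) (PI (Suc i) v)" using PI_sa[OF iU(2) tvU v(1)] .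
  also have "\<dots> = 0" using y0 ip_zero2 tvU by simp
  finally show False using ip_pos v by blast
qed

lemma H2: assumes i: "i \<in> {1..<n}" and v: "v \<in> U"
  and xv: "PI i (PI i v) = smul \<alpha> v" and yv: "PI (Suc i) (PI (Suc i) v) = smul \<beta> v"
  and ab: "\<alpha> \<noteq> \<beta>" and sq: "\<alpha> + \<beta> = (\<alpha> - \<beta>)^2"
  shows "T i v = smul (1 / (\<alpha> - \<beta>)) (PI i v - PI (Suc i) v)"
proof (cases "v = 0")
  case True
  then show ?thesis using li[OF i] by (simp add: lin_zero)
next
  case False
  note L = li[OF i]
  have iU: "i \<le> n" "Suc i \<le> n" using i by auto
  have xU: "PI i z \<in> U" and yU: "PI (Suc i) z \<in> U" and tU: "T i z \<in> U" if "z \<in> U" for z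
    using that i by (auto intro: PIU TU)
  define c where "c = 1 / (\<alpha> - \<beta>)"
  define u where "u = PI i v - PI (Suc i) v"
  define w where "w = T i v - smul c u"
  have uU: "u \<in> U" unfolding u_def using v by (intro Udiff xU yU)
  have wU: "w \<in> U" unfolding w_def using v uU by (intro Udiff tU Uscale)
  have we: "PI i (PI i w) = smul \<beta> w" "PI (Suc i) (PI (Suc i) w) = smul \<alpha> w"
    "T i w = smul (1 - c * c * (\<alpha> + \<beta>)) v - smul c (PI i w - PI (Suc i) w)"
    using w_eig[OF i xv yv ab, of w] unfolding w_def c_def u_def by auto
  have d: "(\<alpha> - \<beta>)^2 \<noteq> 0" using ab by simp
  have "c * c * (\<alpha> + \<beta>) = (\<alpha> + \<beta>) / (\<alpha> - \<beta>)^2" by (simp add: c_def power2_eq_square)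
  then have c1: "c * c * (\<alpha> + \<beta>) = 1" using sq d by simp
  have tw: "T i w = - smul c (PI i w - PI (Suc i) w)" using we(3) c1 by simp
  have ra: "cnj \<alpha> = \<alpha>" using real_eig[OF iU(1) v False xv] .
  have rb: "cnj \<beta> = \<beta>" using real_eig[OF iU(2) v False yv] .
  define z where "z = PI i w - PI (Suc i) w"
  have zU: "z \<in> U" unfolding z_def using wU by (intro Udiff xU yU)
  have xz: "PI i (PI i z) = smul \<beta> z" unfolding z_def using diff_eig[OF i we(1) we(2)] by auto
  have xu: "PI i (PI i u) = smul \<alpha> u" unfolding u_def using diff_eig[OF i xv yv] by auto
  have o1: "ip u w = 0" using orth[OF iU(1) uU wU xu we(1)] ab rb by simp
  have o2: "ip v z = 0" using orth[OF iU(1) v zU xv xz] ab rb by simp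
  have "ip w w = ip (T i v - smul c u) w" by (simp only: w_def[symmetric])
  also have "\<dots> = ip (T i v) w - c * ip u w"
    using v uU wU tU by (simp add: ip_diff1 ip_scale Uscale)
  also have "\<dots> = ip v (T i w)" using ip_T[OF i v wU] o1 by simp
  also have "\<dots> = 0" unfolding tw z_def[symmetric] using v zU by (simp add: ip_neg2 ip_scale2 Uscale o2)
  finally have "w = 0" using ip_pos wU by blast
  then show ?thesis unfolding w_def c_def u_def by simp
qed

end

lemma spinops_of_graded:
  assumes "graded_module smul V0 V1 k n P T"
  shows "spinops smul n T"
proof -
  note D = assms[unfolded graded_module_def]
  have vs: "vector_space smul" using D by (elim conjE)
  have lin': "\<forall>i\<in>{1..<n}. Vector_Spaces.linear smul smul (T i) \<and> T i ` V0 \<subseteq> V1 \<and> T i ` V1 \<subseteq> V0"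
    using D by (elim conjE) assumption
  have sq': "\<forall>i\<in>{1..<n}. \<forall>v. T i (T i v) = v"
    using D by (elim conjE) assumption
  have cube': "\<forall>i. 1 \<le> i \<and> i + 1 < n \<longrightarrow> (\<forall>v. ((T i \<circ> T (i+1)) ^^ 3) v = v)"
    using D by (elim conjE) assumption
  have far': "\<forall>i\<in>{1..<n}. \<forall>l\<in>{1..<n}. (i + 1 < l \<or> l + 1 < i) \<longrightarrow>
         (\<forall>v. T i (T l (T i (T l v))) = - v)"
    using D by (elim conjE) assumption
  have lin: "\<And>i. i\<in>{1..<n} \<Longrightarrow> Vector_Spaces.linear smul smul (T i)" using lin' by blast
  have sq: "\<And>i v. i\<in>{1..<n} \<Longrightarrow> T i (T i v) = v" using sq' by blast
  have cube: "\<And>i v. 1 \<le> i \<Longrightarrow> i + 1 < n \<Longrightarrow> ((T i \<circ> T (i+1)) ^^ 3) v = v" using cube' by blast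
  have far: "\<And>i l v. i\<in>{1..<n} \<Longrightarrow> l\<in>{1..<n} \<Longrightarrow> (i + 1 < l \<or> l + 1 < i) \<Longrightarrow>
         T i (T l (T i (T l v))) = - v" using far' by blast
  have braid: "T i (T (i + 1) (T i v)) = T (i + 1) (T i (T (i + 1) v))" if i: "1 \<le> i" "i + 1 < n" for i v
  proof -
    have s1: "T i (T i w) = w" and s2: "T (Suc i) (T (Suc i) w) = w" for w using sq i by auto
    have "((T i \<circ> T (i+1)) ^^ 3) (T (i+1) (T i (T (i+1) v))) = T (i+1) (T i (T (i+1) v))"
      by (rule cube[OF i])
    then show ?thesis by (simp add: numeral_3_eq_3 s1 s2)
  qed
  have anti: "T i (T l v) = - T l (T i v)" if il: "i\<in>{1..<n}" "l\<in>{1..<n}" "i + 1 < l \<or> l + 1 < i" for i l v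
  proof -
    have "T i (T l (T i (T l (T l (T i v))))) = - T l (T i v)" by (rule far[OF il])
    then show ?thesis using sq il by simp
  qed
  show ?thesis
    by (rule spinops.intro[where smul=smul and n=n and T=T]) (fact vs, fact lin, fact sq, fact braid, fact anti)
qed

theorem mainTheorem19:
  fixes smul :: "complex \<Rightarrow> 'v::ab_group_add \<Rightarrow> 'v"
    and V0 V1 :: "'v set" and k n :: nat
    and P T :: "nat \<Rightarrow> 'v \<Rightarrow> 'v" and a :: "nat \<Rightarrow> complex"
  assumes "simple_graded_module smul V0 V1 k n P T"
    and "pi_eigenspace smul n T a \<noteq> {0}"
  shows "\<forall>i\<in>{1..<n}.
           a i \<noteq> a (i+1) \<and>
           (a i + a (i+1) = (a i - a (i+1))^2 \<longrightarrow>
              (\<forall>v\<in>pi_eigenspace smul n T a.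
                 T i v = smul (1 / (a i - a (i+1))) (pi_op T i v - pi_op T (i+1) v))) \<and>
           (a i + a (i+1) \<noteq> (a i - a (i+1))^2 \<longrightarrow>
              pi_eigenspace smul n T (a(i := a (i+1), i+1 := a i)) \<noteq> {0})"
proof -
  interpret spinops smul n T
    using assms(1) unfolding simple_graded_module_def by (blast intro: spinops_of_graded)
  have zE: "0 \<in> pi_eigenspace smul n T a"
    unfolding pi_eigenspace_def by (auto simp: lin_zero[OF lin_PI])
  obtain v0 where v0: "v0 \<in> pi_eigenspace smul n T a" "v0 \<noteq> 0"
    using assms(2) zE by blast
  have ev: "PI m (PI m v) = smul (a m) v" if "v \<in> pi_eigenspace smul n T a" "m \<in> {1..n}" for v m
    using that unfolding pi_eigenspace_def by auto
  have herm_ex: "\<exists>U ip. herm smul n T U ip \<and> v \<in> U" for v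
  proof -
    obtain U ip where H: "vs.subspace U \<and> v \<in> U \<and> (\<forall>i\<in>{1..<n}. \<forall>u\<in>U. T i u \<in> U) \<and>
      (\<forall>u\<in>U. \<forall>w\<in>U. \<forall>z\<in>U. ip (u + w) z = ip u z + ip w z) \<and>
      (\<forall>c. \<forall>u\<in>U. \<forall>w\<in>U. ip (smul c u) w = c * ip u w) \<and>
      (\<forall>u\<in>U. \<forall>w\<in>U. ip w u = cnj (ip u w)) \<and>
      (\<forall>u\<in>U. ip u u = 0 \<longrightarrow> u = 0) \<and>
      (\<forall>i\<in>{1..<n}. \<forall>u\<in>U. \<forall>w\<in>U. ip (T i u) w = ip u (T i w))"
      using ip_exists[of v] by blast
    have "herm smul n T U ip"
      by (unfold_locales) (use H in blast)+
    then show ?thesis using H by blast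
  qed
  show ?thesis
  proof (rule ballI, intro conjI impI)
    fix i assume i: "i \<in> {1..<n}"
    have mi: "i \<in> {1..n}" "Suc i \<in> {1..n}" using i by auto
    show ne: "a i \<noteq> a (i+1)"
    proof
      assume eq: "a i = a (i+1)"
      obtain U ip where H: "herm smul n T U ip" "v0 \<in> U" using herm_ex by blast
      interpret herm smul n T U ip by (rule H(1))
      show False
        using H1[OF i H(2) v0(2) ev[OF v0(1) mi(1)], of] ev[OF v0(1) mi(2)] eq by simp
    qed
    {
      assume sq: "a i + a (i+1) = (a i - a (i+1))^2"
      show "\<forall>v\<in>pi_eigenspace smul n T a.
                 T i v = smul (1 / (a i - a (i+1))) (pi_op T i v - pi_op T (i+1) v)"
      proof
        fix v assume v: "v \<in> pi_eigenspace smul n T a"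
        obtain U ip where H: "herm smul n T U ip" "v \<in> U" using herm_ex by blast
        interpret herm smul n T U ip by (rule H(1))
        show "T i v = smul (1 / (a i - a (i+1))) (pi_op T i v - pi_op T (i+1) v)"
          using H2[OF i H(2) ev[OF v mi(1)] ev[OF v mi(2)]] ne sq by simp
      qed
    }
    {
      assume nsq: "a i + a (i+1) \<noteq> (a i - a (i+1))^2"
      show "pi_eigenspace smul n T (a(i := a (i+1), i+1 := a i)) \<noteq> {0}"
        using swap_nonzero[OF i v0] ne nsq by simp
    }
  qed
qed

end
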